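(* Under the Depth-First Leader-Follower (DFLF) strategy in an environment $R$ with a single door $s$ (as defined in the context), the following holds for every pixel $q\in R$ and every time $t$. If $q$ is unoccupied at both time $t$ and time $t+1$, then $q$ was never occupied at any time before $t$.
   Context: Pixels are the unit squares of the integer grid, identified with their lower-left corners $(i,j)\in\mathbb{Z}^2$. Two pixels are neighbors if they share an edge, so $(i,j)$ has the four neighbors $(i\pm1,j)$ and $(i,j\pm1)$. The environment $R$ is a finite set of pixels that is connected under this neighbor relation. It contains a single distinguished door pixel $s\in R$. Time is discrete, $t=0,1,2,\dots$. At each time, every pixel of $R$ holds at most one robot. $p(r,t)$ denotes the pixel occupied by robot $r$ at time $t$, and $\mathrm{prev}(r,t)=p(r,t-1)$. In one time step a robot either stays where it is or moves to a neighboring pixel of $R$ that is unoccupied. Vacating rule: if a robot occupies pixel $q$ at time $t$ and a different pixel at time $t+1$, then no robot occupies $q$ at time $t+1$; so the earliest a vacated pixel can be re-entered is time $t+2$. At time $0$ exactly one robot is present, on $s$. Door rule: whenever the robot on $s$ leaves, a new robot appears on $s$ as soon as the vacating rule allows. A pixel of $R$ is a frontier pixel at time $t$ if no robot has occupied it at any time $\le t$. The DFLF strategy works as follows. - Each robot is either moving or stopped. A moving robot is either the leader or a follower. - The first robot is the leader. Each newly appearing robot becomes the successor of the robot that most recently left the door, and that robot becomes its predecessor $\mathrm{pred}(r)$. These relations never change. - At each step, the leader behaves as follows. If the leader has a neighboring frontier pixel, it moves to one of them (chosen arbitrarily). Otherwise it becomes stopped permanently and leadership passes to its successor. If the leader has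 no frontier neighbor and is on the door $s$, the algorithm halts. - A follower $r$ moves at time $t$ to the pixel $\mathrm{prev}(\mathrm{pred}(r),t)$ previously occupied by its predecessor. - A stopped robot never moves again. Makespan: the first time $t^*$ at which every pixel of $R$ is occupied. *)

theory Defs
  imports Main
begin

text \<open>Pixels are identified with their lower-left corners in the integer grid.\<close>
type_synonym pixel = "int \<times> int"

definition nbr :: "pixel \<Rightarrow> pixel \<Rightarrow> bool" where
  "nbr p q \<longleftrightarrow> \<bar>fst p - fst q\<bar> + \<bar>snd p - snd q\<bar> = 1"

definition grid_connected :: "pixel set \<Rightarrow> bool" where
  "grid_connected R \<longleftrightarrow>
     (\<forall>p\<in>R. \<forall>q\<in>R. (\<lambda>a b. a \<in> R \<and> b \<in> R \<and> nbr a b)\<^sup>*\<^sup>* p q)"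

text \<open>Robots are numbered
  in order of appearance (robot 0 is the first robot).
  rpos r  : pixel of robot r at the current time (None = not yet appeared)
  rprev r : pixel of robot r at the previous time (None = not present then)
  nrob    : number of robots that have appeared
  rpred r : predecessor of robot r (meaningful for r > 0)
  stopped : set of stopped robots
  leader  : current leader (None = leadership passed to a successor that has
            not appeared yet)
  last_stopped : the robot that most recently became stopped
  last_left    : the robot that most recently left the door
  visited : pixels occupied at some time up to now
  halted  : the algorithm has halted\<close>
record config =
  rpos :: "nat \<Rightarrow> pixel option"
  rprev :: "nat \<Rightarrow> pixel option"
  nrob :: nat
  rpred :: "nat \<Rightarrow> nat"
  stopped :: "nat set"
  leader :: "nat option"
  last_stopped :: nat
  last_left :: nat
  visited :: "pixel set"
  halted :: bool

definition occupied :: "config \<Rightarrow> pixel \<Rightarrow> bool" where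
  "occupied c q \<longleftrightarrow> (\<exists>r. rpos c r = Some q)"

definition dflf_init :: "pixel \<Rightarrow> config" where
  "dflf_init s = \<lparr> rpos = (\<lambda>r. if r = 0 then Some s else None), rprev = (\<lambda>r. None),
     nrob = 1, rpred = (\<lambda>r. 0), stopped = {}, leader = Some 0, last_stopped = 0,
     last_left = 0, visited = {s}, halted = False \<rparr>"

definition frontier_nbrs :: "pixel set \<Rightarrow> config \<Rightarrow> pixel \<Rightarrow> pixel set" where
  "frontier_nbrs R c p = {q. q \<in> R \<and> nbr p q \<and> q \<notin> visited c}"

definition leader_choice_ok :: "pixel set \<Rightarrow> config \<Rightarrow> pixel option \<Rightarrow> bool" where
  "leader_choice_ok R c mv \<longleftrightarrow>
     (case leader c of
        None \<Rightarrow> mv = None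
      | Some L \<Rightarrow>
          (if frontier_nbrs R c (the (rpos c L)) = {} then mv = None
           else (\<exists>q. mv = Some q \<and> q \<in> frontier_nbrs R c (the (rpos c L)))))"

definition successor_of :: "config \<Rightarrow> nat \<Rightarrow> nat option" where
  "successor_of c L =
     (if \<exists>r. r < nrob c \<and> 0 < r \<and> rpred c r = L
      then Some (SOME r. r < nrob c \<and> 0 < r \<and> rpred c r = L) else None)"

definition halting :: "pixel set \<Rightarrow> pixel \<Rightarrow> config \<Rightarrow> bool" where
  "halting R s c \<longleftrightarrow>
     (\<exists>L. leader c = Some L \<and> frontier_nbrs R c (the (rpos c L)) = {} \<and> rpos c L = Some s)"

definition dflf_next :: "pixel \<Rightarrow> config \<Rightarrow> pixel option \<Rightarrow> config" where
  "dflf_next s c mv = (let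
     stops = (leader c \<noteq> None \<and> mv = None);
     stopped1 = (if stops then insert (the (leader c)) (stopped c) else stopped c);
     leader1 = (if stops then successor_of c (the (leader c)) else leader c);
     last_stopped1 = (if stops then the (leader c) else last_stopped c);
     pos1 = (\<lambda>r. if r < nrob c \<and> leader c = Some r then
                   (case mv of Some q \<Rightarrow> Some q | None \<Rightarrow> rpos c r)
                 else if r < nrob c \<and> r \<notin> stopped c then
                   (case rprev c (rpred c r) of Some x \<Rightarrow> Some x | None \<Rightarrow> rpos c r)
                 else rpos c r);
     last_left1 = (if \<exists>r. rpos c r = Some s \<and> pos1 r \<noteq> Some s
                   then (SOME r. rpos c r = Some s \<and> pos1 r \<noteq> Some s) else last_left c);
     appear = (\<not> occupied c s \<and> (\<forall>r. pos1 r \<noteq> Some s));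
     n = nrob c;
     pos2 = (if appear then pos1(n := Some s) else pos1);
     leader2 = (if appear \<and> leader1 = None \<and> last_left1 = last_stopped1 then Some n else leader1)
   in \<lparr> rpos = pos2, rprev = rpos c, nrob = (if appear then Suc n else n),
        rpred = (if appear then (rpred c)(n := last_left1) else rpred c),
        stopped = stopped1, leader = leader2, last_stopped = last_stopped1,
        last_left = last_left1, visited = visited c \<union> {q. \<exists>r. pos2 r = Some q},
        halted = False \<rparr>)"

definition dflf_step :: "pixel set \<Rightarrow> pixel \<Rightarrow> config \<Rightarrow> config \<Rightarrow> bool" where
  "dflf_step R s c c' \<longleftrightarrow>
     (if halted c then c' = c
      else if halting R s c then c' = c\<lparr>halted := True\<rparr>
      else (\<exists>mv. leader_choice_ok R c mv \<and> c' = dflf_next s c mv))"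

definition dflf_run :: "pixel set \<Rightarrow> pixel \<Rightarrow> (nat \<Rightarrow> config) \<Rightarrow> bool" where
  "dflf_run R s \<sigma> \<longleftrightarrow> \<sigma> 0 = dflf_init s \<and> (\<forall>t. dflf_step R s (\<sigma> t) (\<sigma> (Suc t)))"

end

theory Submission
  imports Defs
begin

definition P1 :: "config \<Rightarrow> pixel option \<Rightarrow> nat \<Rightarrow> pixel option" where
  "P1 c mv = (\<lambda>r. if r < nrob c \<and> leader c = Some r then
                   (case mv of Some q \<Rightarrow> Some q | None \<Rightarrow> rpos c r)
                 else if r < nrob c \<and> r \<notin> stopped c then
                   (case rprev c (rpred c r) of Some x \<Rightarrow> Some x | None \<Rightarrow> rpos c r)
                 else rpos c r)"

definition APP :: "pixel \<Rightarrow> config \<Rightarrow> pixel option \<Rightarrow> bool" where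
  "APP s c mv = (\<not> occupied c s \<and> (\<forall>r. P1 c mv r \<noteq> Some s))"

definition LL :: "pixel \<Rightarrow> config \<Rightarrow> pixel option \<Rightarrow> nat" where
  "LL s c mv = (if \<exists>r. rpos c r = Some s \<and> P1 c mv r \<noteq> Some s
                   then (SOME r. rpos c r = Some s \<and> P1 c mv r \<noteq> Some s) else last_left c)"

lemma next_simps:
  shows "rpos (dflf_next s c mv) = (if APP s c mv then (P1 c mv)(nrob c := Some s) else P1 c mv)"
  and "rprev (dflf_next s c mv) = rpos c"
  and "nrob (dflf_next s c mv) = (if APP s c mv then Suc (nrob c) else nrob c)"
  and "rpred (dflf_next s c mv) = (if APP s c mv then (rpred c)(nrob c := LL s c mv) else rpred c)"
  and "stopped (dflf_next s c mv) = (if leader c \<noteq> None \<and> mv = None then insert (the (leader c)) (stopped c) else stopped c)"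
  and "leader (dflf_next s c mv) = (if APP s c mv \<and> (if leader c \<noteq> None \<and> mv = None then successor_of c (the (leader c)) else leader c) = None
        \<and> LL s c mv = (if leader c \<noteq> None \<and> mv = None then the (leader c) else last_stopped c)
        then Some (nrob c) else (if leader c \<noteq> None \<and> mv = None then successor_of c (the (leader c)) else leader c))"
  and "last_left (dflf_next s c mv) = LL s c mv"
  and "visited (dflf_next s c mv) = visited c \<union> {q. \<exists>r. rpos (dflf_next s c mv) r = Some q}"
  and "halted (dflf_next s c mv) = False"
  unfolding dflf_next_def Let_def P1_def APP_def LL_def by simp_all


definition dinv :: "pixel \<Rightarrow> config \<Rightarrow> bool" where
  "dinv s c \<longleftrightarrow> 1 \<le> nrob c \<and>
    (\<forall>r. nrob c \<le> r \<longrightarrow> rpos c r = None \<and> rprev c r = None) \<and>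
    (\<forall>r<nrob c. rpos c r \<noteq> None) \<and>
    (\<forall>r. 0 < r \<and> r < nrob c \<longrightarrow> rpred c r = r - 1) \<and>
    (\<exists>k. leader c = Some k \<and> k < nrob c \<and> stopped c = {..<k} \<and> (\<forall>r<k. rprev c r = rpos c r)) \<and>
    (\<forall>r. rpos c r = Some s \<longrightarrow> Suc r = nrob c) \<and>
    (\<forall>r. rprev c r = Some s \<longrightarrow> Suc r = nrob c) \<and>
    ((rpos c (nrob c - 1) = Some s \<and> rprev c (nrob c - 1) = None) \<or>
     (rprev c (nrob c - 1) = Some s \<and> \<not> occupied c s)) \<and>
    (\<forall>r. Suc r < nrob c \<longrightarrow> rprev c r \<noteq> None) \<and>
    (last_left c = nrob c - 1 \<or> rpos c (nrob c - 1) = Some s) \<and>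
    s \<in> visited c \<and> (\<forall>r q. rpos c r = Some q \<longrightarrow> q \<in> visited c)"

definition vac :: "config \<Rightarrow> pixel set" where
  "vac c = {q. \<exists>r. rprev c r = Some q \<and> rpos c r \<noteq> Some q}"

lemma dinvD:
  assumes "dinv s c"
  shows "1 \<le> nrob c"
  and "\<And>r. nrob c \<le> r \<Longrightarrow> rpos c r = None"
  and "\<And>r. nrob c \<le> r \<Longrightarrow> rprev c r = None"
  and "\<And>r. r < nrob c \<Longrightarrow> rpos c r \<noteq> None"
  and "\<And>r. 0 < r \<Longrightarrow> r < nrob c \<Longrightarrow> rpred c r = r - 1"
  and "\<exists>k. leader c = Some k \<and> k < nrob c \<and> stopped c = {..<k} \<and> (\<forall>r<k. rprev c r = rpos c r)"
  and "\<And>r. rpos c r = Some s \<Longrightarrow> Suc r = nrob c"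
  and "\<And>r. rprev c r = Some s \<Longrightarrow> Suc r = nrob c"
  and "(rpos c (nrob c - 1) = Some s \<and> rprev c (nrob c - 1) = None) \<or>
     (rprev c (nrob c - 1) = Some s \<and> \<not> occupied c s)"
  and "\<And>r. Suc r < nrob c \<Longrightarrow> rprev c r \<noteq> None"
  and "last_left c = nrob c - 1 \<or> rpos c (nrob c - 1) = Some s"
  and "s \<in> visited c"
  and "\<And>r q. rpos c r = Some q \<Longrightarrow> q \<in> visited c"
  using assms unfolding dinv_def by blast+

lemma inv_init: "dinv s (dflf_init s)"
  unfolding dinv_def dflf_init_def occupied_def by simp

lemma inv_halt: "dinv s c \<Longrightarrow> dinv s (c\<lparr>halted := True\<rparr>)"
  unfolding dinv_def occupied_def by simp

lemma halting_vac:
  assumes I: "dinv s c" and h: "halting R s c"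
  shows "vac c = {}"
proof -
  obtain k where lk: "leader c = Some k" and kn: "k < nrob c" and pk: "\<forall>r<k. rprev c r = rpos c r"
    using dinvD(6)[OF I] by blast
  have ks: "rpos c k = Some s" using h lk by (auto simp: halting_def)
  hence k: "Suc k = nrob c" using dinvD(7)[OF I] by blast
  hence k': "k = nrob c - 1" by simp
  have "rprev c k = None" using dinvD(9)[OF I] ks unfolding k'[symmetric] occupied_def by auto
  show ?thesis
  proof (rule ccontr)
    assume "vac c \<noteq> {}"
    then obtain r q where r: "rprev c r = Some q" "rpos c r \<noteq> Some q" by (auto simp: vac_def)
    have "r < nrob c" using dinvD(3)[OF I, of r] r by (metis not_le option.distinct(1))
    moreover have "\<not> r < k" using pk r by auto
    ultimately have "r = k" using k by auto
    thus False using r \<open>rprev c k = None\<close> by simp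
  qed
qed


lemma step_main:
  assumes I: "dinv s c" and nh: "\<not> halting R s c" and ok: "leader_choice_ok R c mv"
  shows "dinv s (dflf_next s c mv) \<and> vac c \<subseteq> {q. occupied (dflf_next s c mv) q}"
proof -
  define n where "n = nrob c"
  define c' where "c' = dflf_next s c mv"
  obtain k where lk: "leader c = Some k" and kn: "k < n" and st: "stopped c = {..<k}"
     and pk: "\<forall>r<k. rprev c r = rpos c r"
    using dinvD(6)[OF I] unfolding n_def by blast
  have n1: "1 \<le> n" using dinvD(1)[OF I] n_def by simp
  have hi1: "\<And>r. n \<le> r \<Longrightarrow> rpos c r = None" using dinvD(2)[OF I] n_def by simp
  have hi2: "\<And>r. n \<le> r \<Longrightarrow> rprev c r = None" using dinvD(3)[OF I] n_def by simp
  have lo: "\<And>r. r < n \<Longrightarrow> rpos c r \<noteq> None" using dinvD(4)[OF I] n_def by simp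
  have pr: "\<And>r. 0 < r \<Longrightarrow> r < n \<Longrightarrow> rpred c r = r - 1" using dinvD(5)[OF I] n_def by simp
  have s1: "\<And>r. rpos c r = Some s \<Longrightarrow> Suc r = n" using dinvD(7)[OF I] n_def by simp
  have s2: "\<And>r. rprev c r = Some s \<Longrightarrow> Suc r = n" using dinvD(8)[OF I] n_def by simp
  have N: "(rpos c (n - 1) = Some s \<and> rprev c (n - 1) = None) \<or>
     (rprev c (n - 1) = Some s \<and> \<not> occupied c s)" using dinvD(9)[OF I] n_def by simp
  have pv: "\<And>r. Suc r < n \<Longrightarrow> rprev c r \<noteq> None" using dinvD(10)[OF I] n_def by simp
  have ll: "last_left c = n - 1 \<or> rpos c (n - 1) = Some s" using dinvD(11)[OF I] n_def by simp
  have sv: "s \<in> visited c" using dinvD(12)[OF I] by simp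
  have fr: "mv = None \<Longrightarrow> rpos c k \<noteq> Some s"
  proof
    assume "mv = None" "rpos c k = Some s"
    have "frontier_nbrs R c (the (rpos c k)) = {}"
    proof (rule ccontr)
      assume "frontier_nbrs R c (the (rpos c k)) \<noteq> {}"
      thus False using ok \<open>mv = None\<close> lk by (simp add: leader_choice_ok_def)
    qed
    thus False using nh lk \<open>rpos c k = Some s\<close> by (auto simp: halting_def)
  qed
  have mvs: "\<And>q. mv = Some q \<Longrightarrow> q \<noteq> s"
  proof
    fix q assume "mv = Some q" "q = s"
    have "q \<in> frontier_nbrs R c (the (rpos c k))"
      using ok \<open>mv = Some q\<close> lk by (auto simp: leader_choice_ok_def split: if_splits)
    thus False using sv \<open>q = s\<close> by (simp add: frontier_nbrs_def)
  qed
  have P1k: "P1 c mv k = (case mv of Some q \<Rightarrow> Some q | None \<Rightarrow> rpos c k)"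
    using kn lk by (simp add: P1_def n_def)
  have P1lo: "\<And>r. r < k \<Longrightarrow> P1 c mv r = rpos c r"
    using kn lk st by (simp add: P1_def n_def)
  have P1hi: "\<And>r. n \<le> r \<Longrightarrow> P1 c mv r = None"
    using hi1 by (simp add: P1_def n_def)
  have P1mid: "\<And>r. k < r \<Longrightarrow> r < n \<Longrightarrow> P1 c mv r = rprev c (r - 1)"
  proof -
    fix r assume a: "k < r" "r < n"
    have "rprev c (r - 1) \<noteq> None" using pv[of "r - 1"] a by simp
    then obtain x where x: "rprev c (r - 1) = Some x" by blast
    have b: "r \<notin> stopped c" "leader c \<noteq> Some r" "rpred c r = r - 1" "r < nrob c"
      using a lk st pr[of r] n_def by auto
    show "P1 c mv r = rprev c (r - 1)"
      unfolding P1_def using b x by simp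
  qed
  have P1ns: "\<And>r. P1 c mv r \<noteq> Some s"
  proof -
    fix r
    consider "r < k" | "r = k" | "k < r \<and> r < n" | "n \<le> r" by linarith
    thus "P1 c mv r \<noteq> Some s"
    proof cases
      case 1 thus ?thesis using P1lo s1[of r] kn by auto
    next
      case 2 thus ?thesis using P1k fr mvs by (cases mv) auto
    next
      case 3 thus ?thesis using P1mid s2[of "r - 1"] by auto
    next
      case 4 thus ?thesis using P1hi by simp
    qed
  qed
  have P1some: "\<And>r. r < n \<Longrightarrow> P1 c mv r \<noteq> None"
  proof -
    fix r assume rn: "r < n"
    consider "r < k" | "r = k" | "k < r" by linarith
    thus "P1 c mv r \<noteq> None"
    proof cases
      case 1 thus ?thesis using P1lo lo rn by auto
    next
      case 2 thus ?thesis using P1k lo rn by (cases mv) auto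
    next
      case 3 thus ?thesis using P1mid pv[of "r - 1"] rn by auto
    qed
  qed
  have APPe: "APP s c mv \<longleftrightarrow> \<not> occupied c s" using P1ns by (simp add: APP_def)
  have LLe: "LL s c mv = n - 1"
  proof (cases "occupied c s")
    case True
    then obtain r where r: "rpos c r = Some s" by (auto simp: occupied_def)
    hence rn: "r = n - 1" using s1 by force
    have ex: "\<exists>r. rpos c r = Some s \<and> P1 c mv r \<noteq> Some s" using r P1ns by blast
    have "(SOME r. rpos c r = Some s \<and> P1 c mv r \<noteq> Some s) = n - 1"
      apply (rule some_equality)
      using r rn P1ns apply blast
      using s1 by force
    thus ?thesis using ex by (simp add: LL_def)
  next
    case False
    hence ne: "\<not> (\<exists>r. rpos c r = Some s \<and> P1 c mv r \<noteq> Some s)" by (auto simp: occupied_def)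
    have "rpos c (n - 1) \<noteq> Some s" using False by (auto simp: occupied_def)
    hence "last_left c = n - 1" using ll by simp
    moreover have "LL s c mv = last_left c" unfolding LL_def using ne by (rule if_not_P)
    ultimately show ?thesis by simp
  qed
  have occN: "occupied c s \<Longrightarrow> rpos c (n - 1) = Some s \<and> rprev c (n - 1) = None" using N by blast
  have nocc: "\<not> occupied c s \<Longrightarrow> rprev c (n - 1) = Some s" using N by (auto simp: occupied_def)
  have succ: "Suc k < n \<Longrightarrow> successor_of c k = Some (Suc k)"
  proof -
    assume a: "Suc k < n"
    have "(SOME r. r < nrob c \<and> 0 < r \<and> rpred c r = k) = Suc k"
      apply (rule some_equality)
      using a pr[of "Suc k"] n_def apply simp
      using pr n_def by force
    moreover have "\<exists>r. r < nrob c \<and> 0 < r \<and> rpred c r = k"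
      using a pr[of "Suc k"] n_def by (intro exI[of _ "Suc k"]) simp
    ultimately show ?thesis by (simp add: successor_of_def)
  qed
  have nosucc: "\<not> Suc k < n \<Longrightarrow> successor_of c k = None"
    using pr n_def by (auto simp: successor_of_def)
  have np: "nrob c' = (if occupied c s then n else Suc n)"
    using APPe by (simp add: c'_def next_simps n_def)
  have rpp: "\<And>r. rpos c' r = (if \<not> occupied c s \<and> r = n then Some s else P1 c mv r)"
    using APPe by (simp add: c'_def next_simps n_def)
  have rvp: "rprev c' = rpos c" by (simp add: c'_def next_simps)
  have rdp: "\<And>r. rpred c' r = (if \<not> occupied c s \<and> r = n then n - 1 else rpred c r)"
    using APPe LLe by (simp add: c'_def next_simps n_def)
  have llp: "last_left c' = n - 1" using LLe by (simp add: c'_def next_simps)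
  have vp: "visited c' = visited c \<union> {q. \<exists>r. rpos c' r = Some q}" by (simp add: c'_def next_simps)
  define k' where "k' = (if mv = None then Suc k else k)"
  have ldp: "leader c' = Some k'"
  proof (cases "mv = None")
    case True
    show ?thesis
    proof (cases "Suc k < n")
      case True2: True
      thus ?thesis using True succ lk by (simp add: c'_def next_simps k'_def)
    next
      case False
      hence kk: "k = n - 1" using kn by simp
      hence "\<not> occupied c s" using fr True occN by auto
      thus ?thesis using True False nosucc lk APPe LLe kk n1
        by (simp add: c'_def next_simps k'_def n_def)
    qed
  next
    case False
    then obtain q where "mv = Some q" by blast
    thus ?thesis using lk by (simp add: c'_def next_simps k'_def)
  qed
  have stp: "stopped c' = {..<k'}"
    using lk st by (cases mv) (simp_all add: c'_def next_simps k'_def lessThan_Suc)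
  have k'n: "k' < nrob c'"
  proof (cases "mv = None \<and> \<not> Suc k < n")
    case True
    hence kk: "k = n - 1" using kn by auto
    hence "\<not> occupied c s" using fr True occN by auto
    thus ?thesis using np True k'_def kk n1 by simp
  next
    case False thus ?thesis using np kn k'_def by auto
  qed
  have pkp: "\<forall>r<k'. rprev c' r = rpos c' r"
  proof (intro allI impI)
    fix r assume r: "r < k'"
    have rn: "r \<noteq> n" using r k'_def kn by (auto split: if_splits)
    have "P1 c mv r = rpos c r"
    proof (cases "r < k")
      case True thus ?thesis using P1lo pk by simp
    next
      case False
      hence "r = k" "mv = None" using r k'_def by (auto split: if_splits)
      thus ?thesis using P1k by simp
    qed
    thus "rprev c' r = rpos c' r" using rpp rvp rn by simp
  qed
  have inv': "dinv s c'"
    unfolding dinv_def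
  proof (intro conjI)
    show "1 \<le> nrob c'" using np n1 by simp
    show "\<forall>r. nrob c' \<le> r \<longrightarrow> rpos c' r = None \<and> rprev c' r = None"
      using np rpp rvp P1hi hi1 by auto
    show "\<forall>r<nrob c'. rpos c' r \<noteq> None"
      using np rpp P1some by (auto simp: less_Suc_eq split: if_splits)
    show "\<forall>r. 0 < r \<and> r < nrob c' \<longrightarrow> rpred c' r = r - 1"
      using np rdp pr by (auto simp: less_Suc_eq split: if_splits)
    show "\<exists>k. leader c' = Some k \<and> k < nrob c' \<and> stopped c' = {..<k} \<and> (\<forall>r<k. rprev c' r = rpos c' r)"
      using ldp k'n stp pkp by blast
    show "\<forall>r. rpos c' r = Some s \<longrightarrow> Suc r = nrob c'"
      using rpp np P1ns by auto
    show "\<forall>r. rprev c' r = Some s \<longrightarrow> Suc r = nrob c'"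
      using rvp np s1 by (auto simp: occupied_def)
    show "(rpos c' (nrob c' - 1) = Some s \<and> rprev c' (nrob c' - 1) = None) \<or>
     (rprev c' (nrob c' - 1) = Some s \<and> \<not> occupied c' s)"
    proof (cases "occupied c s")
      case True
      have "rprev c' (n - 1) = Some s" using rvp occN True by simp
      moreover have "\<not> occupied c' s" using rpp True P1ns by (simp add: occupied_def)
      ultimately show ?thesis using np True by simp
    next
      case False
      thus ?thesis using np rpp rvp hi1 by simp
    qed
    show "\<forall>r. Suc r < nrob c' \<longrightarrow> rprev c' r \<noteq> None"
      using rvp np lo by (auto split: if_splits)
    show "last_left c' = nrob c' - 1 \<or> rpos c' (nrob c' - 1) = Some s"
      using llp np rpp by auto
    show "s \<in> visited c'" using vp sv by simp
    show "\<forall>r q. rpos c' r = Some q \<longrightarrow> q \<in> visited c'" using vp by auto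
  qed
  have vac': "vac c \<subseteq> {q. occupied c' q}"
  proof
    fix q assume "q \<in> vac c"
    then obtain r where r: "rprev c r = Some q" "rpos c r \<noteq> Some q" by (auto simp: vac_def)
    have rn: "r < n" using hi2[of r] r by (metis not_le option.distinct(1))
    have rk: "\<not> r < k" using pk r by auto
    show "q \<in> {q. occupied c' q}"
    proof (cases "r = n - 1")
      case True
      hence "\<not> occupied c s" using occN r by auto
      moreover have "q = s" using nocc[OF \<open>\<not> occupied c s\<close>] True r by simp
      ultimately show ?thesis using rpp by (auto simp: occupied_def)
    next
      case False
      hence a: "k < Suc r" "Suc r < n" using rn rk by auto
      have e1: "P1 c mv (Suc r) = Some q" using P1mid[OF a] r(1) by simp
      have "Suc r \<noteq> n" using a by simp
      hence "rpos c' (Suc r) = P1 c mv (Suc r)" using rpp[of "Suc r"] by simp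
      hence "rpos c' (Suc r) = Some q" using e1 by simp
      hence "occupied c' q" unfolding occupied_def by blast
      thus ?thesis by simp
    qed
  qed
  show ?thesis using inv' vac' unfolding c'_def by blast
qed


definition MM :: "config \<Rightarrow> bool" where
  "MM c \<longleftrightarrow> visited c \<subseteq> {q. occupied c q} \<union> (if halted c then {} else vac c)"

lemma step_cases:
  assumes "dflf_step R s c c'"
  obtains (H) "halted c" "c' = c"
  | (G) "\<not> halted c" "halting R s c" "c' = c\<lparr>halted := True\<rparr>"
  | (N) mv where "\<not> halted c" "\<not> halting R s c" "leader_choice_ok R c mv" "c' = dflf_next s c mv"
  using assms unfolding dflf_step_def by (auto split: if_splits)

lemma run_inv:
  assumes run: "dflf_run R s \<sigma>"
  shows "dinv s (\<sigma> t) \<and> MM (\<sigma> t)"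
proof (induction t)
  case 0
  have "\<sigma> 0 = dflf_init s" using run by (simp add: dflf_run_def)
  thus ?case using inv_init[of s]
    by (auto simp: MM_def dflf_init_def occupied_def)
next
  case (Suc t)
  define c where "c = \<sigma> t"
  define c' where "c' = \<sigma> (Suc t)"
  have I: "dinv s c" and M: "MM c" using Suc c_def by auto
  have "dflf_step R s c c'" using run by (simp add: dflf_run_def c_def c'_def)
  then have "dinv s c' \<and> MM c'"
  proof (cases rule: step_cases)
    case H thus ?thesis using I M by simp
  next
    case G
    have "vac c = {}" using halting_vac[OF I G(2)] .
    hence "visited c \<subseteq> {q. occupied c q}" using M G by (simp add: MM_def)
    moreover have "occupied c' = occupied c" using G by (simp add: occupied_def fun_eq_iff)
    ultimately show ?thesis using inv_halt[OF I] G by (simp add: MM_def)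
  next
    case (N mv)
    have S: "dinv s c' \<and> vac c \<subseteq> {q. occupied c' q}"
      using step_main[OF I N(2) N(3)] N(4) by simp
    have "visited c' \<subseteq> {q. occupied c' q} \<union> vac c'"
    proof
      fix q assume q: "q \<in> visited c'"
      show "q \<in> {q. occupied c' q} \<union> vac c'"
      proof (cases "q \<in> visited c")
        case False
        hence "\<exists>r. rpos c' r = Some q" using q N(4) by (simp add: next_simps)
        thus ?thesis by (simp add: occupied_def)
      next
        case True
        hence "occupied c q \<or> q \<in> vac c" using M N(1) by (auto simp: MM_def)
        thus ?thesis
        proof
          assume "occupied c q"
          then obtain r where r: "rpos c r = Some q" by (auto simp: occupied_def)
          show ?thesis
          proof (cases "rpos c' r = Some q")
            case True thus ?thesis by (auto simp: occupied_def)
          next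
            case False
            have "rprev c' r = Some q" using r N(4) by (simp add: next_simps)
            thus ?thesis using False by (auto simp: vac_def)
          qed
        next
          assume "q \<in> vac c" thus ?thesis using S by auto
        qed
      qed
    qed
    moreover have "\<not> halted c'" using N(4) by (simp add: next_simps)
    ultimately show ?thesis using S by (simp add: MM_def)
  qed
  thus ?case unfolding c'_def .
qed

lemma visited_step: "dflf_step R s c c' \<Longrightarrow> visited c \<subseteq> visited c'"
  by (cases rule: step_cases) (auto simp: next_simps)

lemma visited_mono:
  assumes run: "dflf_run R s \<sigma>"
  shows "t1 \<le> t2 \<Longrightarrow> visited (\<sigma> t1) \<subseteq> visited (\<sigma> t2)"
proof (induction t2)
  case 0 thus ?case by simp
next
  case (Suc t2)
  have "visited (\<sigma> t2) \<subseteq> visited (\<sigma> (Suc t2))"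
    using run visited_step unfolding dflf_run_def by blast
  thus ?case using Suc by (cases "t1 = Suc t2") auto
qed

theorem mainTheorem2:
  fixes R :: "pixel set" and s q :: pixel and \<sigma> :: "nat \<Rightarrow> config" and t :: nat
  assumes "finite R" and "grid_connected R" and "s \<in> R"
    and "dflf_run R s \<sigma>"
    and "q \<in> R"
    and "\<not> occupied (\<sigma> t) q" and "\<not> occupied (\<sigma> (Suc t)) q"
  shows "\<forall>t' < t. \<not> occupied (\<sigma> t') q"
proof (intro allI impI notI)
  fix t' assume tt: "t' < t" and oc: "occupied (\<sigma> t') q"
  have run: "dflf_run R s \<sigma>" by fact
  obtain r where "rpos (\<sigma> t') r = Some q" using oc unfolding occupied_def by blast
  hence "q \<in> visited (\<sigma> t')" using dinvD(13)[OF conjunct1[OF run_inv[OF run, of t']]] by blast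
  hence qv: "q \<in> visited (\<sigma> t)" using visited_mono[OF run, of t' t] tt by auto
  have I: "dinv s (\<sigma> t)" and M: "MM (\<sigma> t)" using run_inv[OF run] by auto
  have hv: "\<not> halted (\<sigma> t) \<and> q \<in> vac (\<sigma> t)"
    using M qv assms(6) by (auto simp: MM_def split: if_splits)
  have "dflf_step R s (\<sigma> t) (\<sigma> (Suc t))" using run by (simp add: dflf_run_def)
  thus False
  proof (cases rule: step_cases)
    case H thus False using hv by simp
  next
    case G thus False using halting_vac[OF I G(2)] hv by simp
  next
    case (N mv)
    thus False using step_main[OF I N(2) N(3)] hv assms(7) by auto
  qed
qed

end
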